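(* Let $K,d\ge 1$ be integers and let $X\in\mathbb{R}^{K\times d}$ have rows $x_1,\dots,x_K\in\mathbb{R}^d$ that are affinely dependent, i.e. there exists a nonzero $\psi\in\mathbb{R}^K$ with $\sum_{i=1}^K\psi_i=0$ and $\sum_{i=1}^K\psi_i x_i=0$. Define $f:\Delta^K\to\Delta^d$ by $f(\alpha)=\operatorname{softmax}(\alpha^{T}X)$, where $\operatorname{softmax}(v)_c=e^{v_c}/\sum_{c'=1}^d e^{v_{c'}}$. Then $f$ is not injective.
   Context: $\Delta^K=\{\alpha\in\mathbb{R}^K:\alpha_i\ge 0,\ \sum_i\alpha_i=1\}$ denotes the probability simplex; $\alpha^T X\in\mathbb{R}^d$ is the convex combination $\sum_i\alpha_i x_i$ of the rows of $X$. *)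

theory Defs
  imports "HOL-Analysis.Analysis"
begin

definition prob_simplex :: "(real ^ 'n::finite) set" where
  "prob_simplex = {a. (\<forall>i. a $ i \<ge> 0) \<and> (\<Sum>i\<in>UNIV. a $ i) = 1}"

definition softmax :: "real ^ 'd::finite \<Rightarrow> real ^ 'd" where
  "softmax v = (\<chi> c. exp (v $ c) / (\<Sum>c'\<in>UNIV. exp (v $ c')))"

text \<open>alpha^T X = sum_i alpha_i x_i, where row i of X is X $ i.\<close>
definition conv_comb :: "real ^ 'k::finite \<Rightarrow> real ^ 'd ^ 'k \<Rightarrow> real ^ 'd" where
  "conv_comb a X = (\<Sum>i\<in>UNIV. a $ i *\<^sub>R X $ i)"

end

theory Submission
  imports Defs
begin

theorem mainTheorem2:
  fixes X :: "real ^ 'd::finite ^ 'k::finite"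
  assumes "\<exists>\<psi> :: real ^ 'k. \<psi> \<noteq> 0 \<and> (\<Sum>i\<in>UNIV. \<psi> $ i) = 0
             \<and> (\<Sum>i\<in>UNIV. \<psi> $ i *\<^sub>R X $ i) = 0"
  shows "\<not> inj_on (\<lambda>a. softmax (conv_comb a X)) prob_simplex"
proof
  assume inj: "inj_on (\<lambda>a. softmax (conv_comb a X)) prob_simplex"
  obtain \<psi> :: "real ^ 'k" where p0: "\<psi> \<noteq> 0" and ps: "(\<Sum>i\<in>UNIV. \<psi> $ i) = 0"
    and px: "(\<Sum>i\<in>UNIV. \<psi> $ i *\<^sub>R X $ i) = 0" using assms by blast
  define c :: real where "c = 1 / real CARD('k)"
  define M where "M = Max (range (\<lambda>i. \<bar>\<psi> $ i\<bar>))"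
  have Mge: "\<bar>\<psi> $ i\<bar> \<le> M" for i unfolding M_def by (rule Max_ge) auto
  obtain j where "\<psi> $ j \<noteq> 0" using p0 by (metis vec_eq_iff zero_index)
  hence Mpos: "M > 0" using Mge[of j] by linarith
  have cpos: "c > 0" unfolding c_def by simp
  define t where "t = c / M"
  have tpos: "t > 0" unfolding t_def using Mpos cpos by simp
  define a :: "real ^ 'k" where "a = (\<chi> i. c)"
  define b where "b = a + t *\<^sub>R \<psi>"
  have sa: "(\<Sum>i\<in>UNIV. a $ i) = 1" unfolding a_def c_def by simp
  have aS: "a \<in> prob_simplex" unfolding prob_simplex_def using sa cpos a_def by auto
  have "b $ i \<ge> 0" for i
  proof -
    have "t * \<bar>\<psi> $ i\<bar> \<le> t * M" using Mge[of i] tpos by (simp add: mult_left_mono)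
    also have "t * M = c" unfolding t_def using Mpos by simp
    finally have "t * \<bar>\<psi> $ i\<bar> \<le> c" .
    moreover have "- (t * \<bar>\<psi> $ i\<bar>) \<le> t * \<psi> $ i" using tpos
      by (metis abs_ge_minus_self abs_mult abs_of_pos minus_le_iff)
    ultimately show ?thesis unfolding b_def a_def by simp
  qed
  moreover have "(\<Sum>i\<in>UNIV. b $ i) = 1" unfolding b_def
    using sa ps by (simp add: sum.distrib sum_distrib_left[symmetric])
  ultimately have bS: "b \<in> prob_simplex" unfolding prob_simplex_def by auto
  have "conv_comb b X = conv_comb a X + t *\<^sub>R (\<Sum>i\<in>UNIV. \<psi> $ i *\<^sub>R X $ i)"
    unfolding conv_comb_def b_def
    by (simp add: scaleR_add_left sum.distrib scaleR_sum_right)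
  hence eq: "conv_comb b X = conv_comb a X" using px by simp
  have "a \<noteq> b" unfolding b_def using tpos p0 by simp
  thus False using inj_onD[OF inj _ aS bS] eq by auto
qed

end
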